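(* For every set $X=\{X^1,\dots,X^m\}\subseteq S_n$ of $m\ge1$ distinct elements, $$|\mathrm{Elim}(X)|=\sum_{k=1}^m\ \sum_{1\le i_1<\cdots<i_k\le m}3^{z_{X(i_1,\dots,i_k)}}\Big(-2^{k-1}+\sum_{\alpha\in S_k}(-1)^{z(\alpha)+k+1}\,2^{\,z(\alpha)+|\mathrm{BSp}(X(i_1,\dots,i_k),\alpha)|}\Big),$$ where $X(i_1,\dots,i_k)=\{X^{i_1},\dots,X^{i_k}\}$.
   Context: $S_n$ is the set of all nonzero $n$-tuples in $\{-1,0,1\}^n$ whose first nonzero entry equals $1$. A tuple $t=(t_1,\dots,t_n)\in\{1,0,-1,u\}^n$ ($u$ a formal symbol) eliminates $s\in S_n$ if: (i) $t_i\neq0$ and $s_i\neq0$ for some $i$; (ii) there is $k\in\{+1,-1\}$ with $t_i=ks_i$ for all $i$ with $s_i\neq0$ and $t_i\neq0$; (iii) $s_i=0$ whenever $t_i=u$. For $X\subseteq S_n$, $\mathrm{Elim}(X)$ is the set of elements of $S_n$ eliminated by at least one element of $X$. For $Y=\{Y^1,\dots,Y^k\}\subseteq S_n$, $M_Y$ is the $k\times n$ matrix whose $i$-th row is $Y^i$ and $z_Y$ is the number of zero columns of $M_Y$. For a tuple $\alpha$, $z(\alpha)$ is the number of its zero coordinates. For $\alpha\in S_k$, $\mathrm{BSp}(Y,\alpha)$ is the set of indices $c\in\{1,\dots,n\}$ such that the $c$-th column of $M_Y$ is nonzero and equals $\pm(a_1\alpha_1,\dots,a_k\alpha_k)^T$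 for some $(a_1,\dots,a_k)\in\{0,1\}^k\setminus\{(0,\dots,0)\}$. *)

theory Defs
  imports Main
begin

text \<open>n-tuples are represented as lists of length n (0-based indices).
  Tuples over {1,0,-1,u} are represented as int option lists, None standing for u.\<close>

definition S :: "nat \<Rightarrow> int list set" where
  "S n = {s. length s = n \<and> set s \<subseteq> {-1, 0, 1} \<and> (\<exists>i<n. s ! i \<noteq> 0)
            \<and> (\<exists>i<n. s ! i = 1 \<and> (\<forall>j<i. s ! j = 0))}"

definition eliminates :: "nat \<Rightarrow> int option list \<Rightarrow> int list \<Rightarrow> bool" where
  "eliminates n t s \<longleftrightarrow>
     (\<exists>i<n. t ! i \<noteq> Some 0 \<and> s ! i \<noteq> 0) \<and>
     (\<exists>k\<in>{1, -1::int}. \<forall>i<n. s ! i \<noteq> 0 \<and> t ! i \<noteq> Some 0 \<longrightarrow> t ! i = Some (k * s ! i)) \<and>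
     (\<forall>i<n. t ! i = None \<longrightarrow> s ! i = 0)"

definition Elim :: "nat \<Rightarrow> int list set \<Rightarrow> int list set" where
  "Elim n X = {s \<in> S n. \<exists>t\<in>X. eliminates n (map Some t) s}"

definition zcols :: "nat \<Rightarrow> int list list \<Rightarrow> nat" where
  "zcols n Y = card {c. c < n \<and> (\<forall>i<length Y. Y ! i ! c = 0)}"

definition zcount :: "int list \<Rightarrow> nat" where
  "zcount a = card {i. i < length a \<and> a ! i = 0}"

definition BSp :: "nat \<Rightarrow> int list list \<Rightarrow> int list \<Rightarrow> nat set" where
  "BSp n Y \<alpha> = {c. c < n \<and> (\<exists>i<length Y. Y ! i ! c \<noteq> 0) \<and>
      (\<exists>a :: int list. length a = length Y \<and> set a \<subseteq> {0, 1} \<and> (\<exists>i<length a. a ! i \<noteq> 0) \<and>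
         (\<exists>e\<in>{1, -1::int}. \<forall>i<length Y. Y ! i ! c = e * (a ! i * \<alpha> ! i)))}"

definition subrows :: "int list list \<Rightarrow> nat set \<Rightarrow> int list list" where
  "subrows xs I = map (\<lambda>j. xs ! j) (sorted_list_of_set I)"

end

theory Submission imports Defs begin

definition V :: "nat \<Rightarrow> int list set" where
  "V n = {s. set s \<subseteq> {-1,0,1} \<and> length s = n}"

lemma finite_V: "finite (V n)"
  unfolding V_def by (rule finite_lists_length_eq) simp

lemma sum_lists_prod:
  fixes f :: "nat \<Rightarrow> 'a \<Rightarrow> 'b::comm_semiring_1"
  assumes "finite A"
  shows "(\<Sum>l\<in>{l. set l \<subseteq> A \<and> length l = k}. \<Prod>j<k. f j (l!j)) = (\<Prod>j<k. \<Sum>a\<in>A. f j a)"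
proof (induction k arbitrary: f)
  case 0
  have "{l. set l \<subseteq> A \<and> length l = 0} = {[]}" by auto
  then show ?case by simp
next
  case (Suc k)
  let ?L = "{l. set l \<subseteq> A \<and> length l = k}"
  have inj: "inj_on (\<lambda>(xs, n). n#xs) (?L \<times> A)" by (auto simp: inj_on_def)
  have "(\<Sum>l\<in>{l. set l \<subseteq> A \<and> length l = Suc k}. \<Prod>j<Suc k. f j (l!j))
      = (\<Sum>p\<in>?L \<times> A. \<Prod>j<Suc k. f j ((snd p # fst p)!j))"
    unfolding lists_length_Suc_eq by (subst sum.reindex[OF inj]) (simp add: case_prod_beta)
  also have "\<dots> = (\<Sum>p\<in>?L \<times> A. f 0 (snd p) * (\<Prod>j<k. f (Suc j) (fst p ! j)))"
    by (simp add: prod.lessThan_Suc_shift del: prod.lessThan_Suc)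
  also have "\<dots> = (\<Sum>l\<in>?L. \<Sum>a\<in>A. f 0 a * (\<Prod>j<k. f (Suc j) (l ! j)))"
    by (simp add: sum.cartesian_product case_prod_beta)
  also have "\<dots> = (\<Sum>a\<in>A. f 0 a) * (\<Sum>l\<in>?L. (\<Prod>j<k. f (Suc j) (l ! j)))"
    by (simp add: sum_distrib_left sum_distrib_right sum.swap[of _ ?L] mult.commute)
  also have "\<dots> = (\<Sum>a\<in>A. f 0 a) * (\<Prod>j<k. \<Sum>a\<in>A. f (Suc j) a)"
    using Suc.IH[of "\<lambda>j. f (Suc j)"] by simp
  also have "\<dots> = (\<Prod>j<Suc k. \<Sum>a\<in>A. f j a)"
    by (simp add: prod.lessThan_Suc_shift del: prod.lessThan_Suc)
  finally show ?case .
qed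

lemma prod_indicator:
  "(\<Prod>j<(k::nat). (if P j then 1 else 0::int)) = (if \<forall>j<k. P j then 1 else 0)"
  by (induction k) (auto simp: less_Suc_eq)

lemma el_iff:
  assumes "length t = n"
  shows "eliminates n (map Some t) s \<longleftrightarrow>
     (\<exists>i<n. t!i \<noteq> 0 \<and> s!i \<noteq> 0) \<and> (\<exists>e\<in>{1,-1::int}. \<forall>i<n. s!i\<noteq>0 \<and> t!i\<noteq>0 \<longrightarrow> t!i = e * s!i)"
  using assms unfolding eliminates_def by auto

definition w :: "int \<Rightarrow> int" where "w a = (if a = 0 then -2 else 1)"

definition p :: "nat \<Rightarrow> int list \<Rightarrow> int \<Rightarrow> int list \<Rightarrow> bool" where
  "p n t a s \<longleftrightarrow> (\<forall>c<n. s!c \<noteq> 0 \<and> t!c \<noteq> 0 \<longrightarrow> a \<noteq> 0 \<and> t!c = a * s!c)"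

lemma per_j:
  assumes "length t = n"
  shows "(\<Sum>a\<in>{-1,0,1}. w a * (if p n t a s then 1 else 0)) = (if eliminates n (map Some t) s then 1 else 0)"
proof (cases "\<exists>i<n. t!i \<noteq> 0 \<and> s!i \<noteq> 0")
  case False
  then have "\<And>a. p n t a s" unfolding p_def by auto
  moreover have "\<not> eliminates n (map Some t) s" using False el_iff[OF assms] by auto
  ultimately show ?thesis by (simp add: w_def)
next
  case True
  then obtain i where i: "i<n" "t!i \<noteq> 0" "s!i \<noteq> 0" by blast
  have n0: "\<not> p n t 0 s" using i unfolding p_def by auto
  have nboth: "\<not> (p n t 1 s \<and> p n t (-1) s)" using i unfolding p_def by force
  have "eliminates n (map Some t) s \<longleftrightarrow> p n t 1 s \<or> p n t (-1) s"
    using assms True unfolding el_iff[OF assms] p_def by auto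
  then show ?thesis using n0 nboth by (auto simp: w_def)
qed

lemma per_s:
  assumes "\<And>j. j < k \<Longrightarrow> length (Y!j) = n"
  shows "(if \<forall>j<k. eliminates n (map Some (Y!j)) s then 1 else 0::int)
     = (\<Sum>\<alpha>\<in>V k. \<Prod>j<k. w (\<alpha>!j) * (if p n (Y!j) (\<alpha>!j) s then 1 else 0))"
proof -
  have "(\<Sum>\<alpha>\<in>V k. \<Prod>j<k. w (\<alpha>!j) * (if p n (Y!j) (\<alpha>!j) s then 1 else 0))
      = (\<Prod>j<k. \<Sum>a\<in>{-1,0,1}. w a * (if p n (Y!j) a s then 1 else 0))"
    unfolding V_def by (rule sum_lists_prod[where f = "\<lambda>j a. w a * (if p n (Y!j) a s then 1 else 0)"]) simp
  also have "\<dots> = (\<Prod>j<k. (if eliminates n (map Some (Y!j)) s then 1 else 0))"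
    using per_j assms by (intro prod.cong) auto
  finally show ?thesis by (simp add: prod_indicator)
qed

definition q :: "int list list \<Rightarrow> int list \<Rightarrow> nat \<Rightarrow> int \<Rightarrow> bool" where
  "q Y \<alpha> c x \<longleftrightarrow> (\<forall>j<length Y. x \<noteq> 0 \<and> Y!j!c \<noteq> 0 \<longrightarrow> \<alpha>!j \<noteq> 0 \<and> Y!j!c = \<alpha>!j * x)"

lemma BSp_iff:
  assumes "length \<alpha> = length Y" "c < n" "\<exists>i<length Y. Y!i!c \<noteq> 0"
  shows "c \<in> BSp n Y \<alpha> \<longleftrightarrow> q Y \<alpha> c 1 \<or> q Y \<alpha> c (-1)"
proof
  assume "c \<in> BSp n Y \<alpha>"
  then obtain a e where a: "length a = length Y" "set a \<subseteq> {0,1}" "e \<in> {1,-1::int}"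
    "\<forall>i<length Y. Y ! i ! c = e * (a ! i * \<alpha> ! i)"
    unfolding BSp_def by blast
  have "q Y \<alpha> c e"
    unfolding q_def
  proof (intro allI impI)
    fix j assume j: "j < length Y" "e \<noteq> 0 \<and> Y ! j ! c \<noteq> 0"
    then have "a!j \<in> {0,1}" using a(1,2) nth_mem by (metis subsetD)
    moreover have "a!j * \<alpha>!j \<noteq> 0" using a(4) j by auto
    ultimately have "a!j = 1" "\<alpha>!j \<noteq> 0" by auto
    then show "\<alpha> ! j \<noteq> 0 \<and> Y ! j ! c = \<alpha> ! j * e" using a(4) j by simp
  qed
  then show "q Y \<alpha> c 1 \<or> q Y \<alpha> c (-1)" using a(3) by auto
next
  assume h: "q Y \<alpha> c 1 \<or> q Y \<alpha> c (-1)"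
  then obtain e where e: "e \<in> {1,-1::int}" "q Y \<alpha> c e" by auto
  define a where "a = map (\<lambda>i. if Y!i!c \<noteq> 0 then 1 else 0::int) [0..<length Y]"
  obtain i0 where i0: "i0 < length Y" "Y!i0!c \<noteq> 0" using assms(3) by blast
  have "length a = length Y" "set a \<subseteq> {0,1}" "\<exists>i<length a. a ! i \<noteq> 0"
    unfolding a_def using i0 by auto
  moreover have "\<forall>i<length Y. Y ! i ! c = e * (a ! i * \<alpha> ! i)"
    using e unfolding a_def q_def by auto
  ultimately show "c \<in> BSp n Y \<alpha>"
    unfolding BSp_def using assms(2,3) e(1) by blast
qed

lemma col:
  assumes "length \<alpha> = length Y" "c < n"
  shows "(\<Sum>x\<in>{-1,0,1::int}. if q Y \<alpha> c x then 1 else 0::int)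
     = (if c \<in> {c. c<n \<and> (\<forall>i<length Y. Y!i!c = 0)} then 3 else if c \<in> BSp n Y \<alpha> then 2 else 1)"
proof (cases "\<exists>i<length Y. Y!i!c \<noteq> 0")
  case False
  then have "\<And>x. q Y \<alpha> c x" unfolding q_def by auto
  then show ?thesis using False assms by simp
next
  case True
  then obtain i0 where i0: "i0 < length Y" "Y!i0!c \<noteq> 0" by blast
  have "\<not> (q Y \<alpha> c 1 \<and> q Y \<alpha> c (-1))"
    using i0 unfolding q_def by force
  moreover have "q Y \<alpha> c 0" unfolding q_def by simp
  ultimately show ?thesis using BSp_iff[OF assms True] True by auto
qed

lemma prod_h:
  assumes "Z \<subseteq> {..<n::nat}" "B \<subseteq> {..<n}" "Z \<inter> B = {}"
  shows "(\<Prod>c<n. if c \<in> Z then 3 else if c \<in> B then 2 else 1::int) = 3^card Z * 2^card B"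
proof -
  have 1: "{..<n} \<inter> {x. x \<in> Z} = Z" using assms by auto
  have 2: "{..<n} \<inter> - {x. x \<in> Z} \<inter> {x. x \<in> B} = B" using assms by auto
  have f: "finite ({..<n} \<inter> - {x. x \<in> Z})" by (rule finite_subset[of _ "{..<n}"]) auto
  have "(\<Prod>c<n. if c \<in> Z then 3 else if c \<in> B then 2 else 1::int)
     = (\<Prod>c\<in>Z. 3) * (\<Prod>c\<in>{..<n} \<inter> - {x. x \<in> Z}. if c \<in> B then 2 else 1::int)"
    using prod.If_cases[OF finite_lessThan, of "\<lambda>c. c \<in> Z" "\<lambda>_. 3::int" "\<lambda>c. if c \<in> B then 2 else 1" n]
    unfolding 1 by simp
  also have "(\<Prod>c\<in>{..<n} \<inter> - {x. x \<in> Z}. if c \<in> B then 2 else 1::int) = (\<Prod>c\<in>B. 2)"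
    using prod.If_cases[OF f, of "\<lambda>c. c \<in> B" "\<lambda>_. 2::int" "\<lambda>_. 1"]
    unfolding 2 by simp
  finally show ?thesis by simp
qed

lemma prod_w:
  assumes "length \<alpha> = k"
  shows "(\<Prod>j<k. w (\<alpha>!j)) = (-2)^zcount \<alpha>"
proof -
  have 1: "{..<k} \<inter> {x. \<alpha>!x = 0} = {i. i < length \<alpha> \<and> \<alpha>!i = 0}" using assms by auto
  show ?thesis unfolding w_def zcount_def
    by (simp add: prod.If_cases 1)
qed

lemma alpha_sum:
  assumes "\<And>j. j < length Y \<Longrightarrow> length (Y!j) = n" "length \<alpha> = length Y"
  shows "(\<Sum>s\<in>V n. \<Prod>j<length Y. w (\<alpha>!j) * (if p n (Y!j) (\<alpha>!j) s then 1 else 0))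
     = (-2)^zcount \<alpha> * (3^zcols n Y * 2^card (BSp n Y \<alpha>))"
proof -
  let ?k = "length Y"
  have "(\<Sum>s\<in>V n. \<Prod>j<?k. w (\<alpha>!j) * (if p n (Y!j) (\<alpha>!j) s then 1 else 0))
     = (\<Sum>s\<in>V n. (\<Prod>j<?k. w (\<alpha>!j)) * (\<Prod>c<n. if q Y \<alpha> c (s!c) then 1 else 0))"
  proof (rule sum.cong[OF refl])
    fix s assume "s \<in> V n"
    have "(\<forall>j<?k. p n (Y!j) (\<alpha>!j) s) \<longleftrightarrow> (\<forall>c<n. q Y \<alpha> c (s!c))"
      unfolding p_def q_def by blast
    then show "(\<Prod>j<?k. w (\<alpha>!j) * (if p n (Y!j) (\<alpha>!j) s then 1 else 0))
       = (\<Prod>j<?k. w (\<alpha>!j)) * (\<Prod>c<n. if q Y \<alpha> c (s!c) then 1 else 0)"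
      by (simp add: prod.distrib prod_indicator)
  qed
  also have "\<dots> = (\<Prod>j<?k. w (\<alpha>!j)) * (\<Prod>c<n. \<Sum>x\<in>{-1,0,1::int}. if q Y \<alpha> c x then 1 else 0)"
    unfolding V_def sum_distrib_left[symmetric]
    by (subst sum_lists_prod[where f = "\<lambda>c x. if q Y \<alpha> c x then 1 else 0::int"]) simp_all
  also have "\<dots> = (-2)^zcount \<alpha> * (\<Prod>c<n. if c \<in> {c. c<n \<and> (\<forall>i<length Y. Y!i!c = 0)} then 3 else if c \<in> BSp n Y \<alpha> then 2 else 1)"
    using col[OF assms(2)] prod_w[OF assms(2)] by (intro arg_cong2[where f="(*)"] prod.cong) auto
  also have "\<dots> = (-2)^zcount \<alpha> * (3^zcols n Y * 2^card (BSp n Y \<alpha>))"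
    unfolding zcols_def
    by (subst prod_h) (auto simp: BSp_def)
  finally show ?thesis .
qed

lemma S_alt: "s \<in> S n \<longleftrightarrow> s \<in> V n \<and> (\<exists>i<n. s!i = 1 \<and> (\<forall>j<i. s!j = 0))"
  unfolding S_def V_def by force

lemma neg_V: "s \<in> V n \<Longrightarrow> map uminus s \<in> V n"
  unfolding V_def by auto

lemma V_split1: "V n - {replicate n 0} = S n \<union> map uminus ` S n"
proof
  show "V n - {replicate n 0} \<subseteq> S n \<union> map uminus ` S n"
  proof
    fix s assume s: "s \<in> V n - {replicate n 0}"
    then have len: "length s = n" and sv: "s \<in> V n" unfolding V_def by auto
    have "\<exists>i<n. s!i \<noteq> 0"
    proof (rule ccontr)
      assume "\<not> ?thesis"
      then have "s = replicate n 0" using len by (intro nth_equalityI) auto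
      then show False using s by simp
    qed
    then obtain i0 where i0: "i0 < n" "s!i0 \<noteq> 0" by blast
    define i where "i = (LEAST i. s!i \<noteq> 0)"
    have si: "s!i \<noteq> 0" unfolding i_def using i0 by (metis (mono_tags) LeastI)
    have ii: "i \<le> i0" unfolding i_def using i0 by (simp add: Least_le)
    have before: "\<forall>j<i. s!j = 0" unfolding i_def using not_less_Least by blast
    have "s!i \<in> set s" using ii i0 len by simp
    then have "s!i \<in> {-1,1}" using sv si unfolding V_def by auto
    then show "s \<in> S n \<union> map uminus ` S n"
    proof
      assume "s!i = -1"
      then have "map uminus s \<in> S n" unfolding S_alt using neg_V[OF sv] ii i0 len before
        by (intro conjI exI[of _ i]) auto
      moreover have "s = map uminus (map uminus s)" by (simp add: map_idI)
      ultimately show ?thesis by blast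
    next
      assume "s!i \<in> {1}"
      then have "s \<in> S n" unfolding S_alt using sv ii i0 before
        by (intro conjI exI[of _ i]) auto
      then show ?thesis by blast
    qed
  qed
next
  show "S n \<union> map uminus ` S n \<subseteq> V n - {replicate n 0}"
  proof
    fix s assume "s \<in> S n \<union> map uminus ` S n"
    then show "s \<in> V n - {replicate n 0}"
    proof
      assume "s \<in> S n"
      then show ?thesis unfolding S_alt by auto
    next
      assume "s \<in> map uminus ` S n"
      then obtain t where t: "t \<in> S n" "s = map uminus t" by blast
      then obtain i where i: "i<n" "t!i = 1" "t \<in> V n" unfolding S_alt by blast
      then have "length t = n" unfolding V_def by auto
      then have "s!i = -1" using i t by simp
      then have "s \<noteq> replicate n 0" using i by auto
      then show ?thesis using t neg_V i by auto
    qed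
  qed
qed

lemma V_split2: "S n \<inter> map uminus ` S n = {}"
proof (rule ccontr)
  assume "\<not> ?thesis"
  then obtain s t where st: "s \<in> S n" "t \<in> S n" "s = map uminus t" by blast
  obtain i where i: "i<n" "s!i = 1" "\<forall>j<i. s!j = 0" using st(1) unfolding S_alt by blast
  obtain i' where i': "i'<n" "t!i' = 1" "\<forall>j<i'. t!j = 0" using st(2) unfolding S_alt by blast
  have lt: "length t = n" using st(2) unfolding S_alt V_def by auto
  have "\<And>j. j < n \<Longrightarrow> s!j = - (t!j)" using st(3) lt by simp
  then show False using i i'
    by (metis linorder_neqE_nat neg_0_equal_iff_equal zero_neq_neg_one one_neq_neg_one equation_minus_iff)
qed

lemma sum_sym:
  fixes g :: "int list \<Rightarrow> int"
  assumes "\<And>s. s \<in> V n \<Longrightarrow> g (map uminus s) = g s"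
  shows "(\<Sum>s\<in>V n. g s) = g (replicate n 0) + 2 * (\<Sum>s\<in>S n. g s)"
proof -
  have z: "replicate n 0 \<in> V n" unfolding V_def by auto
  have fS: "finite (S n)" using finite_V V_split1 by (metis finite_Diff finite_Un)
  have inj: "inj_on (map uminus) (S n)" by (auto simp: inj_on_def)
  have SV: "S n \<subseteq> V n" using S_alt by blast
  have "(\<Sum>s\<in>V n. g s) = g (replicate n 0) + (\<Sum>s\<in>V n - {replicate n 0}. g s)"
    using sum.remove[OF finite_V z] by simp
  also have "(\<Sum>s\<in>V n - {replicate n 0}. g s) = (\<Sum>s\<in>S n. g s) + (\<Sum>s\<in>map uminus ` S n. g s)"
    unfolding V_split1 using fS V_split2 by (simp add: sum.union_disjoint)
  also have "(\<Sum>s\<in>map uminus ` S n. g s) = (\<Sum>s\<in>S n. g s)"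
    using sum.reindex[OF inj, of g] assms SV by (auto intro: sum.cong)
  finally show ?thesis by simp
qed

lemma card_filter_int: "finite A \<Longrightarrow> int (card {s\<in>A. P s}) = (\<Sum>s\<in>A. if P s then 1 else 0)"
  by (simp add: sum.inter_filter[symmetric])

lemma el_neg:
  assumes "length t = n" "length s = n"
  shows "eliminates n (map Some t) (map uminus s) \<longleftrightarrow> eliminates n (map Some t) s"
proof -
  have a: "(\<exists>e\<in>{1,-1::int}. \<forall>i<n. - s!i\<noteq>0 \<and> t!i\<noteq>0 \<longrightarrow> t!i = e * - s!i)
     \<longleftrightarrow> (\<exists>e\<in>{1,-1::int}. \<forall>i<n. s!i\<noteq>0 \<and> t!i\<noteq>0 \<longrightarrow> t!i = e * s!i)"
    by auto
  have b: "\<And>i. i<n \<Longrightarrow> map uminus s ! i = - (s!i)" using assms(2) by simp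
  have c: "(\<exists>i<n. t!i \<noteq> 0 \<and> map uminus s!i \<noteq> 0) \<longleftrightarrow> (\<exists>i<n. t!i \<noteq> 0 \<and> s!i \<noteq> 0)"
    using b by auto
  have d: "(\<exists>e\<in>{1,-1::int}. \<forall>i<n. map uminus s!i\<noteq>0 \<and> t!i\<noteq>0 \<longrightarrow> t!i = e * map uminus s!i)
     \<longleftrightarrow> (\<exists>e\<in>{1,-1::int}. \<forall>i<n. - s!i\<noteq>0 \<and> t!i\<noteq>0 \<longrightarrow> t!i = e * - s!i)"
    using b by (metis (no_types, lifting))
  show ?thesis unfolding el_iff[OF assms(1)] using a c d by simp
qed

lemma zcount_neg: "zcount (map uminus a) = zcount a"
  unfolding zcount_def by (rule arg_cong[where f=card]) auto

lemma BSp_neg: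
  assumes "length \<alpha> = length Y"
  shows "BSp n Y (map uminus \<alpha>) = BSp n Y \<alpha>"
proof -
  have h: "\<And>a e. length a = length Y \<Longrightarrow> (\<forall>i<length Y. Y ! i ! c = e * (a ! i * map uminus \<alpha> ! i))
     \<longleftrightarrow> (\<forall>i<length Y. Y ! i ! c = (-e) * (a ! i * \<alpha> ! i))" for c
    using assms by auto
  have "\<And>a. length a = length Y \<Longrightarrow> (\<exists>e\<in>{1,-1::int}. \<forall>i<length Y. Y ! i ! c = e * (a ! i * map uminus \<alpha> ! i))
     \<longleftrightarrow> (\<exists>e\<in>{1,-1::int}. \<forall>i<length Y. Y ! i ! c = e * (a ! i * \<alpha> ! i))" for c
  proof -
    fix a :: "int list" assume len: "length a = length Y"
    have 1: "(\<forall>i<length Y. Y ! i ! c = 1 * (a ! i * map uminus \<alpha> ! i)) \<longleftrightarrow> (\<forall>i<length Y. Y ! i ! c = (-1) * (a ! i * \<alpha> ! i))"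
      using h[OF len, of c 1] by simp
    have 2: "(\<forall>i<length Y. Y ! i ! c = (-1) * (a ! i * map uminus \<alpha> ! i)) \<longleftrightarrow> (\<forall>i<length Y. Y ! i ! c = 1 * (a ! i * \<alpha> ! i))"
      using h[OF len, of c "-1"] by simp
    show "?thesis a" using 1 2 by auto
  qed
  then show ?thesis unfolding BSp_def by (intro Collect_cong) blast
qed

lemma BSp_zero: "length Y = k \<Longrightarrow> BSp n Y (replicate k 0) = {}"
  unfolding BSp_def by auto

lemma zcount_zero: "zcount (replicate k 0) = k"
proof -
  have "{i. i < length (replicate k (0::int)) \<and> replicate k (0::int) ! i = 0} = {..<k}" by auto
  then show ?thesis unfolding zcount_def by simp
qed

lemma perY:
  assumes "length Y = k" "k \<ge> 1" "set Y \<subseteq> S n"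
  shows "(-1)^(k+1) * int (card {s\<in>S n. \<forall>j<k. eliminates n (map Some (Y!j)) s})
    = 3 ^ zcols n Y * (- (2 ^ (k - 1)) +
        (\<Sum>\<alpha>\<in>S k. (-1) ^ (zcount \<alpha> + k + 1) * 2 ^ (zcount \<alpha> + card (BSp n Y \<alpha>))))"
proof -
  have SV: "\<And>n. S n \<subseteq> V n" using S_alt by blast
  have fS: "\<And>n. finite (S n)" using SV finite_V finite_subset by blast
  have lenY: "\<And>j. j < length Y \<Longrightarrow> length (Y!j) = n"
    using assms(3) SV nth_mem unfolding V_def by blast
  define z where "z = zcols n Y"
  define E where "E s = (if \<forall>j<k. eliminates n (map Some (Y!j)) s then 1 else 0::int)" for s
  define F where "F \<alpha> = (-2)^zcount \<alpha> * (3^z * 2^card (BSp n Y \<alpha>)::int)" for \<alpha>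
  define C where "C = int (card {s\<in>S n. \<forall>j<k. eliminates n (map Some (Y!j)) s})"
  have hC: "C = (\<Sum>s\<in>S n. E s)" unfolding C_def E_def by (rule card_filter_int[OF fS])
  have E0: "E (replicate n 0) = 0"
  proof -
    have "\<not> eliminates n (map Some (Y!0)) (replicate n 0)"
      using el_iff[OF lenY] assms by auto
    moreover have "0 < k" using assms(2) by simp
    ultimately show ?thesis unfolding E_def by auto
  qed
  have h1: "(\<Sum>s\<in>V n. E s) = 2 * (\<Sum>s\<in>S n. E s)"
  proof -
    have "(\<Sum>s\<in>V n. E s) = E (replicate n 0) + 2 * (\<Sum>s\<in>S n. E s)"
    proof (rule sum_sym)
      fix s assume "s \<in> V n"
      then have "length s = n" unfolding V_def by auto
      then show "E (map uminus s) = E s" unfolding E_def using el_neg lenY assms(1) by simp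
    qed
    then show ?thesis using E0 by simp
  qed
  have h2: "(\<Sum>s\<in>V n. E s) = (\<Sum>\<alpha>\<in>V k. F \<alpha>)"
  proof -
    have "(\<Sum>s\<in>V n. E s) = (\<Sum>s\<in>V n. \<Sum>\<alpha>\<in>V k. \<Prod>j<k. w (\<alpha>!j) * (if p n (Y!j) (\<alpha>!j) s then 1 else 0))"
      unfolding E_def using per_s[of k Y n] lenY assms(1) by (intro sum.cong) auto
    also have "\<dots> = (\<Sum>\<alpha>\<in>V k. \<Sum>s\<in>V n. \<Prod>j<k. w (\<alpha>!j) * (if p n (Y!j) (\<alpha>!j) s then 1 else 0))"
      by (rule sum.swap)
    also have "\<dots> = (\<Sum>\<alpha>\<in>V k. F \<alpha>)"
      unfolding F_def z_def using alpha_sum[OF lenY] assms(1) unfolding V_def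
      by (intro sum.cong) auto
    finally show ?thesis .
  qed
  have h3: "(\<Sum>\<alpha>\<in>V k. F \<alpha>) = (-2)^k * 3^z + 2 * (\<Sum>\<alpha>\<in>S k. F \<alpha>)"
  proof -
    have "(\<Sum>\<alpha>\<in>V k. F \<alpha>) = F (replicate k 0) + 2 * (\<Sum>\<alpha>\<in>S k. F \<alpha>)"
    proof (rule sum_sym)
      fix \<alpha> assume "\<alpha> \<in> V k"
      then have "length \<alpha> = length Y" unfolding V_def using assms(1) by auto
      then show "F (map uminus \<alpha>) = F \<alpha>" unfolding F_def by (simp add: zcount_neg BSp_neg)
    qed
    then show ?thesis unfolding F_def using assms(1) by (simp add: BSp_zero zcount_zero)
  qed
  have hterm: "(-1)^(k+1) * F \<alpha> = 3^z * ((-1)^(zcount \<alpha> + k + 1) * 2^(zcount \<alpha> + card (BSp n Y \<alpha>)))" for \<alpha>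
    unfolding F_def by (simp add: power_add power_minus[of 2] algebra_simps)
  have m1: "(-2::int)^k = (-1)^k * 2^k" by (induction k) auto
  have m2: "(-1::int)^(k+1) * (-1)^k = -1" by (induction k) auto
  have hk: "(-1)^(k+1) * (-2)^k = -(2^k::int)"
    by (simp only: m1 mult.assoc[symmetric] m2)
  have hk2: "2 * 2^(k-1) = (2^k::int)" using assms(2)
    by (metis Suc_diff_le diff_Suc_1 power_Suc)
  define T where "T = (\<Sum>\<alpha>\<in>S k. (-1) ^ (zcount \<alpha> + k + 1) * 2 ^ (zcount \<alpha> + card (BSp n Y \<alpha>))::int)"
  have sF: "(\<Sum>\<alpha>\<in>S k. (-1)^(k+1) * F \<alpha>) = 3^z * T"
    unfolding T_def hterm by (rule sum_distrib_left[symmetric])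
  have "2 * ((-1)^(k+1) * C) = (-1)^(k+1) * ((-2)^k * 3^z + 2 * (\<Sum>\<alpha>\<in>S k. F \<alpha>))"
    using hC h1 h2 h3 by simp
  also have "\<dots> = ((-1)^(k+1) * (-2)^k) * 3^z + 2 * (\<Sum>\<alpha>\<in>S k. (-1)^(k+1) * F \<alpha>)"
    by (simp only: distrib_left sum_distrib_left mult.assoc mult.left_commute)
  also have "\<dots> = -(2^k) * 3^z + 2 * (3^z * T)"
    by (simp only: hk sF)
  also have "\<dots> = 2 * (3^z * (- (2 ^ (k - 1)) + T))"
    by (subst hk2[symmetric]) (simp add: algebra_simps)
  finally show ?thesis unfolding C_def z_def T_def by simp
qed

lemma set_subrows: "finite I \<Longrightarrow> set (subrows xs I) = (\<lambda>j. xs ! j) ` I"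
  unfolding subrows_def by simp

lemma length_subrows: "length (subrows xs I) = card I"
  unfolding subrows_def by simp

theorem mainTheorem13:
  fixes n m :: nat and xs :: "int list list"
  assumes "m \<ge> 1" and "length xs = m" and "distinct xs" and "set xs \<subseteq> S n"
  shows "int (card (Elim n (set xs))) =
    (\<Sum>k=1..m. \<Sum>I\<in>{I. I \<subseteq> {0..<m} \<and> card I = k}.
       3 ^ zcols n (subrows xs I) *
       (- (2 ^ (k - 1)) +
        (\<Sum>\<alpha>\<in>S k. (-1) ^ (zcount \<alpha> + k + 1) *
             2 ^ (zcount \<alpha> + card (BSp n (subrows xs I) \<alpha>)))))"
proof -
  have fS: "finite (S n)" using S_alt finite_V finite_subset by (metis subsetI)
  define E where "E i = {s\<in>S n. eliminates n (map Some (xs!i)) s}" for i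
  define f where "f X = int (card (X \<inter> S n))" for X
  define g where "g B = 3 ^ zcols n (subrows xs B) *
       (- (2 ^ (card B - 1)) +
        (\<Sum>\<alpha>\<in>S (card B). (-1) ^ (zcount \<alpha> + card B + 1) *
             2 ^ (zcount \<alpha> + card (BSp n (subrows xs B) \<alpha>)))::int)" for B
  have el: "Elim n (set xs) = \<Union> (E ` {0..<m})"
  proof -
    have "set xs = (\<lambda>i. xs!i) ` {0..<m}" using assms(2) by (auto simp: set_conv_nth)
    then show ?thesis unfolding Elim_def E_def by auto
  qed
  have add: "\<And>X Y. disjnt X Y \<Longrightarrow> f (X \<union> Y) = f X + f Y"
  proof -
    fix X Y :: "int list set" assume "disjnt X Y"
    then have "card ((X \<inter> S n) \<union> (Y \<inter> S n)) = card (X \<inter> S n) + card (Y \<inter> S n)"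
      using fS by (intro card_Un_disjoint) (auto simp: disjnt_def)
    then show "f (X \<union> Y) = f X + f Y" unfolding f_def by (simp add: Int_Un_distrib2)
  qed
  have ie: "f (\<Union> (E ` {0..<m})) = (\<Sum>B | B \<subseteq> {0..<m} \<and> B \<noteq> {}. (-1) ^ (card B + 1) * f (\<Inter> (E ` B)))"
    using Incl_Excl_UN[OF add, of "{0..<m}" E] by simp
  have lhs: "int (card (Elim n (set xs))) = f (\<Union> (E ` {0..<m}))"
    unfolding f_def el[symmetric] Elim_def by (simp add: Int_absorb2 subset_iff)
  have tm: "(-1) ^ (card B + 1) * f (\<Inter> (E ` B)) = g B" if B: "B \<subseteq> {0..<m}" "B \<noteq> {}" for B
  proof -
    have finB: "finite B" using B finite_subset by blast
    have k1: "card B \<ge> 1" using B finB by (simp add: Suc_le_eq card_gt_0_iff)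
    let ?Y = "subrows xs B"
    have setY: "set ?Y \<subseteq> S n"
    proof
      fix y assume "y \<in> set ?Y"
      then obtain j where j: "j \<in> B" "y = xs!j" unfolding set_subrows[OF finB] by blast
      then have "j < length xs" using B assms(2) by auto
      then have "xs!j \<in> set xs" by (rule nth_mem)
      then show "y \<in> S n" using j assms(4) by blast
    qed
    have "\<Inter> (E ` B) \<inter> S n = {s\<in>S n. \<forall>j<card B. eliminates n (map Some (?Y!j)) s}"
    proof -
      have "\<And>s. (\<forall>j<card B. eliminates n (map Some (?Y!j)) s) \<longleftrightarrow> (\<forall>i\<in>B. eliminates n (map Some (xs!i)) s)"
      proof -
        fix s
        have "(\<forall>j<card B. eliminates n (map Some (?Y!j)) s) \<longleftrightarrow> (\<forall>y\<in>set ?Y. eliminates n (map Some y) s)"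
          unfolding all_set_conv_all_nth length_subrows ..
        then show "?thesis s" unfolding set_subrows[OF finB] by simp
      qed
      then show ?thesis unfolding E_def using B by auto
    qed
    then have "f (\<Inter> (E ` B)) = int (card {s\<in>S n. \<forall>j<card B. eliminates n (map Some (?Y!j)) s})"
      unfolding f_def by simp
    then show ?thesis unfolding g_def using perY[OF length_subrows k1 setY] by simp
  qed
  have regroup: "{B. B \<subseteq> {0..<m} \<and> B \<noteq> {}} = (\<Union>k\<in>{1..m}. {B. B \<subseteq> {0..<m} \<and> card B = k})"
  proof (intro equalityI subsetI)
    fix B assume "B \<in> {B. B \<subseteq> {0..<m} \<and> B \<noteq> {}}"
    then have "B \<subseteq> {0..<m}" "B \<noteq> {}" by auto
    moreover then have "card B \<le> m" "finite B" using card_mono[of "{0..<m}" B] finite_subset by auto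
    ultimately show "B \<in> (\<Union>k\<in>{1..m}. {B. B \<subseteq> {0..<m} \<and> card B = k})"
      by (auto simp: Suc_le_eq card_gt_0_iff)
  next
    fix B assume "B \<in> (\<Union>k\<in>{1..m}. {B. B \<subseteq> {0..<m} \<and> card B = k})"
    then show "B \<in> {B. B \<subseteq> {0..<m} \<and> B \<noteq> {}}" by auto
  qed
  have "int (card (Elim n (set xs))) = (\<Sum>B | B \<subseteq> {0..<m} \<and> B \<noteq> {}. g B)"
    unfolding lhs ie by (rule sum.cong[OF refl], rule tm) auto
  also have "\<dots> = (\<Sum>k=1..m. \<Sum>B\<in>{B. B \<subseteq> {0..<m} \<and> card B = k}. g B)"
    unfolding regroup
  proof (rule sum.UNION_disjoint)
    show "finite {1..m}" by simp
    show "\<forall>k\<in>{1..m}. finite {B. B \<subseteq> {0..<m} \<and> card B = k}"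
    proof
      fix k show "finite {B. B \<subseteq> {0..<m} \<and> card B = k}"
        by (rule finite_subset[of _ "Pow {0..<m}"]) auto
    qed
    show "\<forall>i\<in>{1..m}. \<forall>j\<in>{1..m}. i \<noteq> j \<longrightarrow>
        {B. B \<subseteq> {0..<m} \<and> card B = i} \<inter> {B. B \<subseteq> {0..<m} \<and> card B = j} = {}"
      by blast
  qed
  also have "\<dots> = (\<Sum>k=1..m. \<Sum>I\<in>{I. I \<subseteq> {0..<m} \<and> card I = k}.
       3 ^ zcols n (subrows xs I) *
       (- (2 ^ (k - 1)) +
        (\<Sum>\<alpha>\<in>S k. (-1) ^ (zcount \<alpha> + k + 1) *
             2 ^ (zcount \<alpha> + card (BSp n (subrows xs I) \<alpha>)))))"
    unfolding g_def by (intro sum.cong) auto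
  finally show ?thesis .
qed

end
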